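(* Let $G$ be a connected (fork, co-dart)-free graph. Then either $G$ has a homogeneous set, or for every vertex $v$ of $G$, $G[M(v)]$ is perfect.
   Context: All graphs are finite and simple. For a vertex $v$, $M(v)=V(G)\setminus(N(v)\cup\{v\})$ is the set of non-neighbours of $v$. The fork is obtained from $K_{1,3}$ by subdividing one edge once. The paw is a triangle with one pendant vertex attached; the co-dart is the disjoint union of a paw and an isolated vertex. $G$ is $(H_1,H_2)$-free if it has no induced subgraph isomorphic to $H_1$ or $H_2$. A set $S\subseteq V(G)$ is a homogeneous set if $1<|S|<|V(G)|$ and every vertex outside $S$ is adjacent to all or to none of the vertices of $S$. A graph is perfect if every induced subgraph $H$ satisfies $\chi(H)=\omega(H)$. *)

theory Defs
  imports Main
begin

definition graph :: "'a set \<Rightarrow> ('a \<Rightarrow> 'a \<Rightarrow> bool) \<Rightarrow> bool" where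
  "graph V E \<longleftrightarrow> finite V \<and> (\<forall>x y. E x y \<longrightarrow> x \<in> V \<and> y \<in> V)
     \<and> (\<forall>x y. E x y \<longrightarrow> E y x) \<and> (\<forall>x. \<not> E x x)"

definition induced :: "('a \<Rightarrow> 'a \<Rightarrow> bool) \<Rightarrow> 'a set \<Rightarrow> 'a \<Rightarrow> 'a \<Rightarrow> bool" where
  "induced E S = (\<lambda>x y. E x y \<and> x \<in> S \<and> y \<in> S)"

definition has_induced :: "'a set \<Rightarrow> ('a \<Rightarrow> 'a \<Rightarrow> bool) \<Rightarrow> 'b set \<Rightarrow> ('b \<Rightarrow> 'b \<Rightarrow> bool) \<Rightarrow> bool" where
  "has_induced V E W F \<longleftrightarrow>
     (\<exists>f. inj_on f W \<and> f ` W \<subseteq> V \<and> (\<forall>x\<in>W. \<forall>y\<in>W. F x y \<longleftrightarrow> E (f x) (f y)))"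

definition sym_edges :: "(nat \<times> nat) list \<Rightarrow> nat \<Rightarrow> nat \<Rightarrow> bool" where
  "sym_edges L = (\<lambda>x y. (x, y) \<in> set L \<or> (y, x) \<in> set L)"

text \<open>Fork: K_{1,3} with centre 0 and leaves 1,2,4, the edge 0-4 subdivided by 3.\<close>
definition fork_V :: "nat set" where "fork_V = {0..4}"
definition fork_E :: "nat \<Rightarrow> nat \<Rightarrow> bool" where
  "fork_E = sym_edges [(0,1),(0,2),(0,3),(3,4)]"

text \<open>Co-dart: paw (triangle 0,1,2 with pendant 3 attached to 0) plus isolated vertex 4.\<close>
definition codart_V :: "nat set" where "codart_V = {0..4}"
definition codart_E :: "nat \<Rightarrow> nat \<Rightarrow> bool" where
  "codart_E = sym_edges [(0,1),(1,2),(0,2),(0,3)]"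

definition connected_graph :: "'a set \<Rightarrow> ('a \<Rightarrow> 'a \<Rightarrow> bool) \<Rightarrow> bool" where
  "connected_graph V E \<longleftrightarrow> (\<forall>x\<in>V. \<forall>y\<in>V. E\<^sup>*\<^sup>* x y)"

definition nonnbrs :: "'a set \<Rightarrow> ('a \<Rightarrow> 'a \<Rightarrow> bool) \<Rightarrow> 'a \<Rightarrow> 'a set" where
  "nonnbrs V E v = V - ({u. E v u} \<union> {v})"

definition homogeneous_set :: "'a set \<Rightarrow> ('a \<Rightarrow> 'a \<Rightarrow> bool) \<Rightarrow> 'a set \<Rightarrow> bool" where
  "homogeneous_set V E S \<longleftrightarrow> S \<subseteq> V \<and> 1 < card S \<and> card S < card V \<and>
     (\<forall>v\<in>V - S. (\<forall>s\<in>S. E v s) \<or> (\<forall>s\<in>S. \<not> E v s))"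

definition proper_colouring :: "'a set \<Rightarrow> ('a \<Rightarrow> 'a \<Rightarrow> bool) \<Rightarrow> nat \<Rightarrow> ('a \<Rightarrow> nat) \<Rightarrow> bool" where
  "proper_colouring V E k c \<longleftrightarrow> c ` V \<subseteq> {..<k} \<and> (\<forall>x\<in>V. \<forall>y\<in>V. E x y \<longrightarrow> c x \<noteq> c y)"

definition chromatic_number :: "'a set \<Rightarrow> ('a \<Rightarrow> 'a \<Rightarrow> bool) \<Rightarrow> nat" where
  "chromatic_number V E = (LEAST k. \<exists>c. proper_colouring V E k c)"

definition clique :: "'a set \<Rightarrow> ('a \<Rightarrow> 'a \<Rightarrow> bool) \<Rightarrow> 'a set \<Rightarrow> bool" where
  "clique V E C \<longleftrightarrow> C \<subseteq> V \<and> (\<forall>x\<in>C. \<forall>y\<in>C. x \<noteq> y \<longrightarrow> E x y)"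

definition clique_number :: "'a set \<Rightarrow> ('a \<Rightarrow> 'a \<Rightarrow> bool) \<Rightarrow> nat" where
  "clique_number V E = Max (card ` {C. clique V E C})"

definition perfect :: "'a set \<Rightarrow> ('a \<Rightarrow> 'a \<Rightarrow> bool) \<Rightarrow> bool" where
  "perfect V E \<longleftrightarrow> (\<forall>S\<subseteq>V. chromatic_number S (induced E S) = clique_number S (induced E S))"

end

theory Submission
  imports Defs
begin



lemma fork_emb:
  assumes V: "a0\<in>V" "a1\<in>V" "a2\<in>V" "a3\<in>V" "a4\<in>V"
    and sym: "\<And>x y. E x y \<Longrightarrow> E y x" and irr: "\<And>x. \<not> E x x"
    and e: "E a0 a1" "E a0 a2" "E a0 a3" "E a3 a4"
    and ne: "\<not>E a1 a2" "\<not>E a1 a3" "\<not>E a1 a4" "\<not>E a2 a3" "\<not>E a2 a4" "\<not>E a0 a4"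
    and d: "a1 \<noteq> a2"
  shows "has_induced V E fork_V fork_E"
proof -
  define f where "f = (\<lambda>i::nat. if i = 0 then a0 else if i=1 then a1 else if i=2 then a2 else if i = 3 then a3 else a4)"
  have FV: "fork_V = {0,1,2,3,4}" by (auto simp: fork_V_def)
  have ds: "a0 \<noteq> a1" "a0\<noteq>a2" "a0\<noteq>a3" "a0\<noteq>a4" "a1\<noteq>a3" "a1\<noteq>a4" "a2\<noteq>a3" "a2\<noteq>a4" "a3\<noteq>a4"
    using e ne irr sym by metis+
  have es: "E a1 a0" "E a2 a0" "E a3 a0" "E a4 a3" using e sym by blast+
  have nes: "\<not>E a2 a1" "\<not>E a3 a1" "\<not>E a4 a1" "\<not>E a3 a2" "\<not>E a4 a2" "\<not>E a4 a0" 
    using ne sym by blast+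
  have i: "inj_on f fork_V" unfolding FV f_def using ds d by (simp add: inj_on_def)
  have s: "f ` fork_V \<subseteq> V" unfolding FV f_def using V by simp
  have a: "\<forall>x\<in>fork_V. \<forall>y\<in>fork_V. fork_E x y \<longleftrightarrow> E (f x) (f y)"
    unfolding FV f_def fork_E_def sym_edges_def using e es ne nes irr by simp
  show ?thesis unfolding has_induced_def using i s a by blast
qed

lemma codart_emb:
  assumes V: "a0\<in>V" "a1\<in>V" "a2\<in>V" "a3\<in>V" "a4\<in>V"
    and sym: "\<And>x y. E x y \<Longrightarrow> E y x" and irr: "\<And>x. \<not> E x x"
    and e: "E a0 a1" "E a1 a2" "E a0 a2" "E a0 a3"
    and ne: "\<not>E a1 a3" "\<not>E a2 a3" "\<not>E a0 a4" "\<not>E a1 a4" "\<not>E a2 a4" "\<not>E a3 a4"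
  shows "has_induced V E codart_V codart_E"
proof -
  define f where "f = (\<lambda>i::nat. if i = 0 then a0 else if i=1 then a1 else if i=2 then a2 else if i = 3 then a3 else a4)"
  have FV: "codart_V = {0,1,2,3,4}" by (auto simp: codart_V_def)
  have ds: "a0 \<noteq> a1" "a0\<noteq>a2" "a0\<noteq>a3" "a0\<noteq>a4" "a1\<noteq>a2" "a1\<noteq>a3" "a1\<noteq>a4" "a2\<noteq>a3" "a2\<noteq>a4" "a3\<noteq>a4"
    using e ne irr sym by metis+
  have es: "E a1 a0" "E a2 a1" "E a2 a0" "E a3 a0" using e sym by blast+
  have nes: "\<not>E a3 a1" "\<not>E a3 a2" "\<not>E a4 a0" "\<not>E a4 a1" "\<not>E a4 a2" "\<not>E a4 a3"
    using ne sym by blast+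
  have i: "inj_on f codart_V" unfolding FV f_def using ds by (simp add: inj_on_def)
  have s: "f ` codart_V \<subseteq> V" unfolding FV f_def using V by simp
  have a: "\<forall>x\<in>codart_V. \<forall>y\<in>codart_V. codart_E x y \<longleftrightarrow> E (f x) (f y)"
    unfolding FV f_def codart_E_def sym_edges_def using e es ne nes irr by simp
  show ?thesis unfolding has_induced_def using i s a by blast
qed



lemma clique_le_colours:
  assumes "finite T" "proper_colouring T R k c" "clique T R C"
  shows "card C \<le> k"
proof -
  have CT: "C \<subseteq> T" using assms(3) by (simp add: clique_def)
  have "inj_on c C" using assms(2,3) CT unfolding inj_on_def proper_colouring_def clique_def by blast
  moreover have "c ` C \<subseteq> {..<k}" using assms(2) CT unfolding proper_colouring_def by blast
  ultimately have "card C \<le> card {..<k}" by (intro card_inj_on_le) auto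
  then show ?thesis by simp
qed

lemma chi_omega:
  assumes "finite T" "proper_colouring T R k c" "clique T R C" "card C = k"
  shows "chromatic_number T R = clique_number T R"
proof -
  have "chromatic_number T R \<le> k" unfolding chromatic_number_def
    by (rule Least_le) (use assms(2) in blast)
  moreover have "\<exists>c'. proper_colouring T R (chromatic_number T R) c'"
    unfolding chromatic_number_def by (rule LeastI_ex) (use assms(2) in blast)
  then obtain c' where c': "proper_colouring T R (chromatic_number T R) c'" by blast
  then have "k \<le> chromatic_number T R" using clique_le_colours[OF assms(1) c' assms(3)] assms(4) by simp
  ultimately have 1: "chromatic_number T R = k" by simp
  have fin: "finite (card ` {C. clique T R C})"
    by (rule finite_imageI, rule finite_subset[of _ "Pow T"]) (auto simp: clique_def assms(1))
  have "clique_number T R = k" unfolding clique_number_def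
    apply (rule Max_eqI[OF fin])
    using clique_le_colours[OF assms(1,2)] assms(3,4) by auto
  with 1 show ?thesis by simp
qed



definition walkf :: "('a \<Rightarrow> 'a \<Rightarrow> bool) \<Rightarrow> (nat \<Rightarrow> 'a) \<Rightarrow> nat \<Rightarrow> bool" where
  "walkf R g n \<longleftrightarrow> (\<forall>i<n. R (g i) (g (Suc i)))"

definition oddcw :: "('a \<Rightarrow> 'a \<Rightarrow> bool) \<Rightarrow> (nat \<Rightarrow> 'a) \<Rightarrow> nat \<Rightarrow> bool" where
  "oddcw R g n \<longleftrightarrow> walkf R g n \<and> g 0 = g n \<and> odd n"

lemma min_oddcw_distinct:
  assumes w: "oddcw R g n" and mini: "\<And>h m. m < n \<Longrightarrow> \<not> oddcw R h m"
    and ij: "i < j" "j < n" and eq: "g i = g j"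
  shows False
proof -
  define g1 where "g1 = (\<lambda>k. g (i + k))"
  define g2 where "g2 = (\<lambda>k. if k \<le> i then g k else g (k + (j - i)))"
  have w1: "walkf R g1 (j - i)" using w ij unfolding oddcw_def walkf_def g1_def by auto
  have c1: "g1 0 = g1 (j - i)" using eq ij by (simp add: g1_def)
  have w2: "walkf R g2 (n - (j - i))" unfolding walkf_def
  proof (intro allI impI)
    fix k assume k: "k < n - (j - i)"
    have W: "\<And>l. l < n \<Longrightarrow> R (g l) (g (Suc l))" using w unfolding oddcw_def walkf_def by auto
    consider "k < i" | "k = i" | "k > i" by linarith
    then show "R (g2 k) (g2 (Suc k))"
    proof cases
      case 1 then show ?thesis using W ij by (simp add: g2_def)
    next
      case 2 then show ?thesis using W[of j] ij eq by (simp add: g2_def)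
    next
      case 3 then show ?thesis using W[of "k + (j - i)"] ij k by (simp add: g2_def)
    qed
  qed
  have c2: "g2 0 = g2 (n - (j - i))" using w ij unfolding oddcw_def by (simp add: g2_def)
  have "odd (j - i) \<or> odd (n - (j - i))" using w ij unfolding oddcw_def by auto
  then show False
  proof
    assume "odd (j - i)" then have "oddcw R g1 (j - i)" using w1 c1 by (simp add: oddcw_def)
    then show False using mini[of "j - i"] ij by auto
  next
    assume "odd (n - (j - i))" then have "oddcw R g2 (n - (j - i))" using w2 c2 by (simp add: oddcw_def)
    then show False using mini[of "n - (j - i)"] ij by auto
  qed
qed

lemma min_oddcw_chordless:
  assumes sym: "\<And>x y. R x y \<Longrightarrow> R y x"
    and w: "oddcw R g n" and mini: "\<And>h m. m < n \<Longrightarrow> \<not> oddcw R h m"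
    and ij: "i < j" "j < n" and r: "R (g i) (g j)"
  shows "j = Suc i \<or> (i = 0 \<and> j = n - 1)"
proof (rule ccontr)
  assume a: "\<not> (j = Suc i \<or> (i = 0 \<and> j = n - 1))"
  have W: "\<And>l. l < n \<Longrightarrow> R (g l) (g (Suc l))" using w unfolding oddcw_def walkf_def by auto
  define g1 where "g1 = (\<lambda>k. if k \<le> j - i then g (i + k) else g i)"
  define g2 where "g2 = (\<lambda>k. if k \<le> i then g k else g (k - i - 1 + j))"
  have w1: "walkf R g1 (Suc (j - i))" unfolding walkf_def
  proof (intro allI impI)
    fix k assume k: "k < Suc (j - i)"
    show "R (g1 k) (g1 (Suc k))"
    proof (cases "k = j - i")
      case True then show ?thesis using sym[OF r] ij by (simp add: g1_def)
    next
      case False then show ?thesis using W[of "i + k"] ij k by (simp add: g1_def)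
    qed
  qed
  have c1: "g1 0 = g1 (Suc (j - i))" by (simp add: g1_def)
  have w2: "walkf R g2 (i + 1 + (n - j))" unfolding walkf_def
  proof (intro allI impI)
    fix k assume k: "k < i + 1 + (n - j)"
    consider "k < i" | "k = i" | "k > i" by linarith
    then show "R (g2 k) (g2 (Suc k))"
    proof cases
      case 1 then show ?thesis using W ij by (simp add: g2_def)
    next
      case 2 then show ?thesis using r by (simp add: g2_def)
    next
      case 3 
      then have e: "Suc (k - i - 1 + j) = Suc k - i - 1 + j" by simp
      show ?thesis using W[of "k - i - 1 + j"] ij k 3 unfolding g2_def e by simp
    qed
  qed
  have c2: "g2 0 = g2 (i + 1 + (n - j))"
  proof -
    have "\<not> (i + 1 + (n - j) \<le> i)" "i + 1 + (n - j) - i - 1 + j = n" using ij by auto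
    then have "g2 (i + 1 + (n - j)) = g n" unfolding g2_def by metis
    then show ?thesis using w unfolding oddcw_def by (simp add: g2_def)
  qed
  have "odd (Suc (j - i)) \<or> odd (i + 1 + (n - j))" using w ij unfolding oddcw_def by auto
  then show False
  proof
    assume "odd (Suc (j - i))" then have "oddcw R g1 (Suc (j - i))" using w1 c1 by (simp add: oddcw_def)
    then show False using mini[of "Suc (j - i)"] ij a by auto
  next
    assume "odd (i + 1 + (n - j))" then have "oddcw R g2 (i + 1 + (n - j))" using w2 c2 by (simp add: oddcw_def)
    then show False using mini[of "i + 1 + (n - j)"] ij a by auto
  qed
qed



definition hole :: "'a set \<Rightarrow> ('a \<Rightarrow> 'a \<Rightarrow> bool) \<Rightarrow> (int \<Rightarrow> 'a) \<Rightarrow> int \<Rightarrow> bool" where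
  "hole S E f n \<longleftrightarrow> 5 \<le> n \<and> odd n \<and> (\<forall>i. f i \<in> S) \<and>
     (\<forall>i j. E (f i) (f j) \<longleftrightarrow> n dvd (i - j - 1) \<or> n dvd (i - j + 1)) \<and>
     (\<forall>i j. f i = f j \<longleftrightarrow> n dvd (i - j))"

lemma dvd_small1:
  fixes n d :: int
  assumes "0 < n" "-n \<le> d" "d < n"
  shows "n dvd d \<longleftrightarrow> d = 0 \<or> d = -n"
proof
  assume "n dvd d"
  show "d = 0 \<or> d = -n"
  proof (rule ccontr)
    assume "\<not> (d = 0 \<or> d = -n)"
    then have "d \<noteq> 0" "\<bar>d\<bar> < n" using assms by auto
    with dvd_imp_le_int[OF \<open>d \<noteq> 0\<close> \<open>n dvd d\<close>] assms show False by auto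
  qed
qed auto

lemma dvd_small2:
  fixes n d :: int
  assumes "0 < n" "-n < d" "d \<le> n"
  shows "n dvd d \<longleftrightarrow> d = 0 \<or> d = n"
proof
  assume "n dvd d"
  show "d = 0 \<or> d = n"
  proof (rule ccontr)
    assume "\<not> (d = 0 \<or> d = n)"
    then have "d \<noteq> 0" "\<bar>d\<bar> < n" using assms by auto
    with dvd_imp_le_int[OF \<open>d \<noteq> 0\<close> \<open>n dvd d\<close>] assms show False by auto
  qed
qed auto

lemma dvd_shift:
  fixes n i j c :: int
  shows "n dvd (i - j + c) \<longleftrightarrow> n dvd (i mod n - j mod n + c)"
proof -
  have "i - j + c = (i mod n - j mod n + c) + n * (i div n - j div n)"
    by (simp add: algebra_simps)
  then show ?thesis by (metis dvd_add_left_iff dvd_triv_left)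
qed

lemma hole_from_oddcw:
  assumes sym: "\<And>x y. E x y \<Longrightarrow> E y x" and irr: "\<And>x. \<not> E x x"
    and w: "oddcw (induced E T) g n" and mini: "\<And>h m. m < n \<Longrightarrow> \<not> oddcw (induced E T) h m"
    and n5: "5 \<le> n"
  shows "hole T E (\<lambda>i. g (nat (i mod int n))) (int n)"
proof -
  let ?R = "induced E T"
  have symR: "\<And>x y. ?R x y \<Longrightarrow> ?R y x" using sym by (auto simp: induced_def)
  have W: "\<And>l. l < n \<Longrightarrow> ?R (g l) (g (Suc l))" using w unfolding oddcw_def walkf_def by auto
  have gT: "\<And>l. l < n \<Longrightarrow> g l \<in> T" using W by (auto simp: induced_def)
  have gn: "g n = g 0" using w by (simp add: oddcw_def)
  have nat_adj: "\<And>p q. p < n \<Longrightarrow> q < n \<Longrightarrow> E (g p) (g q) \<longleftrightarrow>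
        (q = Suc p \<or> p = Suc q \<or> (p = 0 \<and> q = n - 1) \<or> (q = 0 \<and> p = n - 1))"
  proof -
    fix p q assume pq: "p < n" "q < n"
    have RE: "E (g p) (g q) \<longleftrightarrow> ?R (g p) (g q)" using gT pq by (auto simp: induced_def)
    show "?thesis p q"
    proof
      assume e: "E (g p) (g q)"
      then have r: "?R (g p) (g q)" using RE by simp
      consider "p < q" | "p = q" | "q < p" by linarith
      then show "q = Suc p \<or> p = Suc q \<or> (p = 0 \<and> q = n - 1) \<or> (q = 0 \<and> p = n - 1)"
      proof cases
        case 1 then show ?thesis using min_oddcw_chordless[OF symR w mini 1 pq(2) r] by auto
      next
        case 2 then show ?thesis using e irr by simp
      next
        case 3 then show ?thesis using min_oddcw_chordless[OF symR w mini 3 pq(1) symR[OF r]] by auto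
      qed
    next
      assume "q = Suc p \<or> p = Suc q \<or> (p = 0 \<and> q = n - 1) \<or> (q = 0 \<and> p = n - 1)"
      then have "?R (g p) (g q)"
      proof (elim disjE)
        assume "q = Suc p" then show ?thesis using W pq by simp
      next
        assume "p = Suc q" then show ?thesis using W pq symR by simp
      next
        assume a: "p = 0 \<and> q = n - 1"
        then have "?R (g q) (g p)" using W[of q] pq gn by (simp add: Suc_diff_1)
        then show ?thesis using symR by blast
      next
        assume a: "q = 0 \<and> p = n - 1"
        then show ?thesis using W[of p] pq gn by (simp add: Suc_diff_1)
      qed
      then show "E (g p) (g q)" using RE by simp
    qed
  qed
  define f where "f = (\<lambda>i. g (nat (i mod int n)))"
  have n0: "(0::int) < int n" using n5 by simp
  have fT: "\<And>i. f i \<in> T"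
  proof -
    fix i
    have "nat (i mod int n) < n" using n0 by (simp add: nat_less_iff)
    then show "f i \<in> T" using gT by (simp add: f_def)
  qed
  have adj: "\<And>i j. E (f i) (f j) \<longleftrightarrow> int n dvd (i - j - 1) \<or> int n dvd (i - j + 1)"
  proof -
    fix i j
    define P where "P = i mod int n"
    define Q where "Q = j mod int n"
    have P: "0 \<le> P" "P < int n" and Q: "0 \<le> Q" "Q < int n" using n0 by (auto simp: P_def Q_def)
    have pn: "nat P < n" "nat Q < n" using P Q by auto
    have "E (f i) (f j) \<longleftrightarrow> E (g (nat P)) (g (nat Q))" by (simp add: f_def P_def Q_def)
    also have "\<dots> \<longleftrightarrow> (nat Q = Suc (nat P) \<or> nat P = Suc (nat Q) \<or> (nat P = 0 \<and> nat Q = n - 1) \<or> (nat Q = 0 \<and> nat P = n - 1))"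
      using nat_adj[OF pn] .
    also have "\<dots> \<longleftrightarrow> (Q = P + 1 \<or> P = Q + 1 \<or> (P = 0 \<and> Q = int n - 1) \<or> (Q = 0 \<and> P = int n - 1))"
      using P Q n0 by auto
    also have "\<dots> \<longleftrightarrow> (P - Q - 1 = 0 \<or> P - Q - 1 = - int n) \<or> (P - Q + 1 = 0 \<or> P - Q + 1 = int n)"
      using P Q n0 by auto
    also have "\<dots> \<longleftrightarrow> int n dvd (P - Q - 1) \<or> int n dvd (P - Q + 1)"
      using dvd_small1[OF n0, of "P - Q - 1"] dvd_small2[OF n0, of "P - Q + 1"] P Q by auto
    also have "\<dots> \<longleftrightarrow> int n dvd (i - j - 1) \<or> int n dvd (i - j + 1)"
      using dvd_shift[of "int n" i j "-1"] dvd_shift[of "int n" i j 1] by (simp add: P_def Q_def)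
    finally show "?thesis i j" .
  qed
  have eq: "\<And>i j. f i = f j \<longleftrightarrow> int n dvd (i - j)"
  proof -
    fix i j
    define P where "P = i mod int n"
    define Q where "Q = j mod int n"
    have P: "0 \<le> P" "P < int n" and Q: "0 \<le> Q" "Q < int n" using n0 by (auto simp: P_def Q_def)
    have pn: "nat P < n" "nat Q < n" using P Q by auto
    have "f i = f j \<longleftrightarrow> g (nat P) = g (nat Q)" by (simp add: f_def P_def Q_def)
    also have "\<dots> \<longleftrightarrow> nat P = nat Q"
    proof
      assume e: "g (nat P) = g (nat Q)"
      show "nat P = nat Q"
      proof (rule ccontr)
        assume "nat P \<noteq> nat Q"
        then consider "nat P < nat Q" | "nat Q < nat P" by linarith
        then show False
        proof cases
          case 1 then show False using min_oddcw_distinct[OF w mini 1 _ e] pn by auto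
        next
          case 2 then show False using min_oddcw_distinct[OF w mini 2 _ e[symmetric]] pn by auto
        qed
      qed
    qed simp
    also have "\<dots> \<longleftrightarrow> P = Q" using P Q by auto
    also have "\<dots> \<longleftrightarrow> int n dvd (P - Q + 0)" using dvd_small1[OF n0, of "P - Q"] P Q by auto
    also have "\<dots> \<longleftrightarrow> int n dvd (i - j)"
      using dvd_shift[of "int n" i j 0] by (simp add: P_def Q_def)
    finally show "?thesis i j" .
  qed
  have "odd (int n)" using w by (simp add: oddcw_def)
  then show ?thesis using n5 fT adj eq unfolding hole_def f_def by simp
qed



locale hctx =
  fixes V :: "'a set" and E :: "'a \<Rightarrow> 'a \<Rightarrow> bool" and v :: 'a and f :: "int \<Rightarrow> 'a" and n :: int
  assumes G: "graph V E"
    and nf: "\<not> has_induced V E fork_V fork_E"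
    and nc: "\<not> has_induced V E codart_V codart_E"
    and vV: "v \<in> V"
    and h: "hole (nonnbrs V E v) E f n"
begin

lemma sym: "E x y \<Longrightarrow> E y x" using G by (auto simp: graph_def)
lemma irr: "\<not> E x x" using G by (auto simp: graph_def)
lemma inV: "E x y \<Longrightarrow> x \<in> V" "E x y \<Longrightarrow> y \<in> V" using G by (auto simp: graph_def)

lemma n5: "5 \<le> n" and nodd: "odd n" using h by (auto simp: hole_def)

lemma fM: "f i \<in> nonnbrs V E v" using h by (auto simp: hole_def)
lemma fV: "f i \<in> V" and fv: "\<not> E v (f i)" "\<not> E (f i) v" "f i \<noteq> v"
  using fM[of i] sym by (auto simp: nonnbrs_def)

lemma adj: "E (f i) (f j) \<longleftrightarrow> n dvd (i - j - 1) \<or> n dvd (i - j + 1)"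
  using h by (auto simp: hole_def)
lemma feq: "f i = f j \<longleftrightarrow> n dvd (i - j)"
  using h by (auto simp: hole_def)

lemma nd: "k \<noteq> 0 \<Longrightarrow> \<bar>k\<bar> < n \<Longrightarrow> \<not> n dvd k"
  using dvd_imp_le_int[of k n] n5 by auto

lemma ndc: "\<not> n dvd 1" "\<not> n dvd -1" "\<not> n dvd 2" "\<not> n dvd -2" "\<not> n dvd 3" "\<not> n dvd -3"
  "\<not> n dvd 4" "\<not> n dvd -4"
  using nd[of 1] nd[of "-1"] nd[of 2] nd[of "-2"] nd[of 3] nd[of "-3"] nd[of 4] nd[of "-4"] n5 by auto

lemma e1: "E (f i) (f (i + 1))" "E (f (i + 1)) (f i)" "E (f i) (f (i - 1))" "E (f (i - 1)) (f i)"
  by (simp_all add: adj)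

lemma fork_no:
  assumes "a0\<in>V" "a1\<in>V" "a2\<in>V" "a3\<in>V" "a4\<in>V"
    and "E a0 a1" "E a0 a2" "E a0 a3" "E a3 a4"
    and "\<not>E a1 a2" "\<not>E a1 a3" "\<not>E a1 a4" "\<not>E a2 a3" "\<not>E a2 a4" "\<not>E a0 a4"
    and "a1 \<noteq> a2"
  shows False
  using fork_emb[OF assms(1-5) sym irr assms(6-16)] nf by blast

lemma codart_no:
  assumes "a0\<in>V" "a1\<in>V" "a2\<in>V" "a3\<in>V" "a4\<in>V"
    and "E a0 a1" "E a1 a2" "E a0 a2" "E a0 a3"
    and "\<not>E a1 a3" "\<not>E a2 a3" "\<not>E a0 a4" "\<not>E a1 a4" "\<not>E a2 a4" "\<not>E a3 a4"
  shows False
  using codart_emb[OF assms(1-5) sym irr assms(6-15)] nc by blast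

lemma M_props: "x \<in> nonnbrs V E v \<Longrightarrow> x \<in> V \<and> x \<noteq> v \<and> \<not> E v x \<and> \<not> E x v"
  using sym by (auto simp: nonnbrs_def)

lemma paw_M:
  assumes "a \<in> nonnbrs V E v" "b \<in> nonnbrs V E v" "c \<in> nonnbrs V E v" "d \<in> nonnbrs V E v"
    and "E a b" "E b c" "E a c" "E c d" "\<not> E a d" "\<not> E b d"
  shows False
proof -
  note M = M_props[OF assms(1)] M_props[OF assms(2)] M_props[OF assms(3)] M_props[OF assms(4)]
  show False
    apply (rule codart_no[of c a b d v])
    using M assms sym vV by blast+
qed

lemma lemA:
  assumes w: "w \<in> nonnbrs V E v" and e: "E w (f i)"
  shows "\<not> E w (f (i + 1))"
proof
  assume e1': "E w (f (i + 1))"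
  have step: "E w (f (i + int k)) \<and> E w (f (i + int k + 1))" for k
  proof (induction k)
    case 0 then show ?case using e e1' by simp
  next
    case (Suc k)
    have "E w (f (i + int k + 2))"
    proof (rule ccontr)
      assume ne: "\<not> E w (f (i + int k + 2))"
      show False
        apply (rule paw_M[of w "f (i + int k)" "f (i + int k + 1)" "f (i + int k + 2)"])
        using w fM Suc.IH ne sym n5 by (auto simp: adj ndc)
    qed
    then show ?case using Suc.IH by (simp add: algebra_simps)
  qed
  have all: "E w (f j)" for j
  proof -
    have nn: "int (nat ((j - i) mod n)) = (j - i) mod n" using n5 by simp
    have "j - (i + (j - i) mod n) = (j - i) - (j - i) mod n" by simp
    also have "\<dots> = n * ((j - i) div n)" by (rule minus_mod_eq_mult_div)
    finally have "f j = f (i + (j - i) mod n)" unfolding feq by simp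
    then have "f j = f (i + int (nat ((j - i) mod n)))" using nn by simp
    then show ?thesis using step[of "nat ((j - i) mod n)"] by metis
  qed
  show False
    apply (rule paw_M[of "f 0" "f 1" w "f 3"])
    using w fM all sym n5 by (auto simp: adj ndc)
qed

lemma lemA': "w \<in> nonnbrs V E v \<Longrightarrow> E w (f i) \<Longrightarrow> \<not> E w (f (i - 1))"
  using lemA[of w "i - 1"] by auto

lemma F1:
  assumes x: "E x v" and e: "E x (f i)"
  shows "E x (f (i - 1)) \<or> E x (f (i + 1))"
proof (rule ccontr)
  assume ne: "\<not> (E x (f (i - 1)) \<or> E x (f (i + 1)))"
  have d: "f (i - 1) \<noteq> f (i + 1)" using ndc n5 by (simp add: feq)
  show False
    apply (rule fork_no[of "f i" "f (i - 1)" "f (i + 1)" x v])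
    using fV inV x vV e ne fv sym d n5 by (auto simp: adj ndc e1)
qed

lemma F2:
  assumes x: "E x v" and e: "E x (f a)" "E x (f (a + 1))" and ne: "\<not> E x (f m)"
  shows "n dvd (m - a + 1) \<or> n dvd (m - a) \<or> n dvd (m - a - 1) \<or> n dvd (m - a - 2)"
proof (rule ccontr)
  assume nd: "\<not> ?thesis"
  have q: "a - m - 1 = -(m - a + 1)" "a - m + 1 = -(m - a - 1)"
    "a + 1 - m - 1 = -(m - a)" "a + 1 - m + 1 = -(m - a - 2)" by simp_all
  have "\<not> E (f a) (f m)" unfolding adj q(1,2) dvd_minus_iff using nd by simp
  moreover have "\<not> E (f (a + 1)) (f m)" unfolding adj q(3,4) dvd_minus_iff using nd by simp
  ultimately show False
    apply -
    apply (rule codart_no[of x "f a" "f (a + 1)" v "f m"])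
    using fV inV x vV e ne fv sym by (auto simp: e1)
qed

lemma adjd:
  assumes x: "E x v" and a: "E x (f b)" "E x (f (b + 1))"
    and "\<not> n dvd (d + 1)" "\<not> n dvd d" "\<not> n dvd (d - 1)" "\<not> n dvd (d - 2)"
  shows "E x (f (b + d))"
  using F2[OF x a, of "b + d"] assms(4-7) by auto

lemma F2c:
  assumes x: "E x v" and a: "E x (f b)" "E x (f c)" "c = b + 1" and ne: "\<not> E x (f m)"
    and "\<not> n dvd (m - b + 1)" "\<not> n dvd (m - b)" "\<not> n dvd (m - b - 1)" "\<not> n dvd (m - b - 2)"
  shows False
  using F2[OF x a(1) _ ne] a(2,3) assms(6-9) by auto

lemma n57: "n = 5 \<or> 7 \<le> n" using n5 nodd by presburger

lemma lemB:
  assumes x: "E x v" "E x (f i)"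
  shows "E x (f j)"
proof (rule ccontr)
  assume nj: "\<not> E x (f j)"
  obtain a where a: "E x (f a)" "E x (f (a + 1))"
    using F1[OF x] x(2) by (metis diff_add_cancel)
  have "f j = f (a - 1) \<or> f j = f (a + 2)"
  proof -
    have "n dvd (j - a + 1) \<or> n dvd (j - a) \<or> n dvd (j - a - 1) \<or> n dvd (j - a - 2)"
      using F2[OF x(1) a nj] .
    moreover have "\<not> n dvd (j - a)" using nj a(1) by (auto simp: feq[of j a, symmetric])
    moreover have "\<not> n dvd (j - a - 1)" using nj a(2) feq[of j "a + 1"] by (auto simp: algebra_simps)
    ultimately have "n dvd (j - (a - 1)) \<or> n dvd (j - (a + 2))" by (auto simp: algebra_simps)
    then show ?thesis by (auto simp: feq)
  qed
  then have na: "\<not> E x (f (a - 1)) \<or> \<not> E x (f (a + 2))" using nj by auto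
  from n57 show False
  proof
    assume n7: "7 \<le> n"
    have nd7: "\<not> n dvd 5" "\<not> n dvd -5" "\<not> n dvd 6" "\<not> n dvd -6"
      using nd[of 5] nd[of "-5"] nd[of 6] nd[of "-6"] n7 by auto
    from na show False
    proof
      assume na1: "\<not> E x (f (a - 1))"
      have a3: "E x (f (a + 3))" using adjd[OF x(1) a, of 3] ndc by simp
      have a4: "E x (f (a + 4))" using adjd[OF x(1) a, of 4] ndc nd7 by simp
      show False using F2c[OF x(1) a3 a4 _ na1] ndc nd7 by simp
    next
      assume na2: "\<not> E x (f (a + 2))"
      have a3: "E x (f (a + -3))" using adjd[OF x(1) a, of "-3"] ndc nd7 by simp
      have a4: "E x (f (a + -2))" using adjd[OF x(1) a, of "-2"] ndc nd7 by simp
      show False using F2c[OF x(1) a3 a4 _ na2] ndc nd7 by simp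
    qed
  next
    assume n5': "n = 5"
    have a3: "E x (f (a + 3))" using adjd[OF x(1) a, of 3] ndc by simp
    have f4: "f (a + 4) = f (a - 1)" using n5' by (simp add: feq)
    from na show False
    proof
      assume na1: "\<not> E x (f (a - 1))"
      have a2: "E x (f (a + 2))" using F1[OF x(1) a3] na1 f4 by (simp add: algebra_simps)
      show False using F2c[OF x(1) a(2) a2 _ na1] ndc by simp
    next
      assume na2: "\<not> E x (f (a + 2))"
      have am: "E x (f (a - 1))" using F1[OF x(1) a3] na2 f4 by (simp add: algebra_simps)
      show False using F2c[OF x(1) am a(1) _ na2] ndc by simp
    qed
  qed
qed

lemma homog: "\<exists>S. homogeneous_set V E S"
proof -
  define Z where "Z = {z \<in> V. \<forall>i. E z (f i)}"
  define W where "W = {w \<in> V. w \<notin> Z \<and> w \<notin> range f \<and> (\<exists>i. E w (f i))}"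
  define K where "K = range f \<union> W"
  have finV: "finite V" using G by (simp add: graph_def)
  have W_M: "w \<in> nonnbrs V E v" if w: "w \<in> W" for w
  proof -
    obtain i where wi: "E w (f i)" "w \<in> V" "w \<notin> Z" using w by (auto simp: W_def)
    have "w \<noteq> v" using wi fv by auto
    moreover have "\<not> E v w"
    proof
      assume "E v w"
      then have "E w v" by (rule sym)
      then have "\<forall>j. E w (f j)" using lemB wi by blast
      then show False using wi by (auto simp: Z_def)
    qed
    ultimately show ?thesis using wi by (auto simp: nonnbrs_def)
  qed
  have Z_N: "E z v" if z: "z \<in> Z" for z
  proof (rule ccontr)
    assume nz: "\<not> E z v"
    have zf: "\<And>i. E z (f i)" "z \<in> V" using z by (auto simp: Z_def)
    have "z \<noteq> v" using zf fv by metis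
    then have "z \<in> nonnbrs V E v" using zf nz sym by (auto simp: nonnbrs_def)
    then show False using lemA zf by blast
  qed
  have KV: "K \<subseteq> V" using fV by (auto simp: K_def W_def)
  have vK: "v \<notin> K" using fv by (auto simp: K_def W_def)
  have finK: "finite K" using KV finV finite_subset by blast
  have c1: "1 < card K"
  proof -
    have "f 0 \<noteq> f 1" using e1(1)[of 0] irr by force
    moreover have "{f 0, f 1} \<subseteq> K" by (auto simp: K_def)
    ultimately show ?thesis using card_mono[OF finK, of "{f 0, f 1}"] by simp
  qed
  have c2: "card K < card V"
    using psubset_card_mono[OF finV] KV vK vV by blast
  have hom: "(\<forall>s\<in>K. E u s) \<or> (\<forall>s\<in>K. \<not> E u s)" if u: "u \<in> V - K" for u
  proof (cases "u \<in> Z")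
    case True
    have "\<forall>s\<in>K. E u s"
    proof
      fix s assume s: "s \<in> K"
      show "E u s"
      proof (cases "s \<in> range f")
        case True then show ?thesis using \<open>u \<in> Z\<close> by (auto simp: Z_def)
      next
        case False
        then have sW: "s \<in> W" using s by (auto simp: K_def)
        show ?thesis
        proof (rule ccontr)
          assume nus: "\<not> E u s"
          have sM: "s \<in> nonnbrs V E v" using W_M[OF sW] .
          note sp = M_props[OF sM]
          obtain i where si: "E s (f i)" using sW by (auto simp: W_def)
          have uv: "E u v" using Z_N[OF True] .
          have uf: "\<And>j. E u (f j)" "u \<in> V" using True by (auto simp: Z_def)
          have "\<exists>m. \<not> E s (f m) \<and> (m = i + 2 \<or> m = i + 3)"
            using lemA[OF sM, of "i + 2"] by (auto simp: algebra_simps)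
          then obtain m where m: "\<not> E s (f m)" "m = i + 2 \<or> m = i + 3" by blast
          have nfm: "\<not> E (f m) (f i)" using m(2) ndc n5 by (auto simp: adj)
          show False
            apply (rule fork_no[of u v "f m" "f i" s])
            using uf uv vV fV fv sp si m(1) nfm sym nus by blast+
        qed
      qed
    qed
    then show ?thesis ..
  next
    case False
    have nf: "\<And>i. \<not> E u (f i)"
    proof
      fix i assume "E u (f i)"
      then have "u \<in> W" using u False by (auto simp: W_def K_def)
      then show False using u by (auto simp: K_def)
    qed
    have "\<forall>s\<in>K. \<not> E u s"
    proof
      fix s assume s: "s \<in> K"
      show "\<not> E u s"
      proof (cases "s \<in> range f")
        case True then show ?thesis using nf by auto
      next
        case False
        then have sW: "s \<in> W" using s by (auto simp: K_def)
        show ?thesis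
        proof
          assume us: "E u s"
          have sM: "s \<in> nonnbrs V E v" using W_M[OF sW] .
          note sp = M_props[OF sM]
          obtain i where si: "E s (f i)" using sW by (auto simp: W_def)
          have n1: "\<not> E s (f (i + 1))" "\<not> E s (f (i - 1))" using lemA[OF sM si] lemA'[OF sM si] by auto
          have d: "f (i - 1) \<noteq> f (i + 1)" using ndc n5 by (simp add: feq)
          have nn: "\<not> E (f (i - 1)) (f (i + 1))" using ndc n5 by (simp add: adj)
          show False
            apply (rule fork_no[of "f i" "f (i - 1)" "f (i + 1)" s u])
            using fV u us si n1 nf d nn sym e1 sp by blast+
        qed
      qed
    qed
    then show ?thesis ..
  qed
  show ?thesis
    unfolding homogeneous_set_def using KV c1 c2 hom by blast
qed

end



definition pawfree :: "'a set \<Rightarrow> ('a \<Rightarrow> 'a \<Rightarrow> bool) \<Rightarrow> bool" where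
  "pawfree S E \<longleftrightarrow> (\<forall>a\<in>S. \<forall>b\<in>S. \<forall>c\<in>S. \<forall>d\<in>S. E a b \<longrightarrow> E b c \<longrightarrow> E a c \<longrightarrow> E c d \<longrightarrow> \<not> E a d \<longrightarrow> \<not> E b d \<longrightarrow> False)"

definition cm :: "'a set \<Rightarrow> ('a \<Rightarrow> 'a \<Rightarrow> bool) \<Rightarrow> bool" where
  "cm X E \<longleftrightarrow> (\<forall>a\<in>X. \<forall>b\<in>X. \<forall>c\<in>X. a \<noteq> b \<longrightarrow> b \<noteq> c \<longrightarrow> a \<noteq> c \<longrightarrow> \<not> E a b \<longrightarrow> \<not> E b c \<longrightarrow> \<not> E a c)"

lemma edge_out:
  assumes "R\<^sup>*\<^sup>* p q" "p \<in> X" "q \<notin> X"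
  shows "\<exists>s t. R s t \<and> s \<in> X \<and> t \<notin> X"
  using assms by (induction rule: rtranclp_induct) auto

locale olctx =
  fixes S :: "'a set" and E :: "'a \<Rightarrow> 'a \<Rightarrow> bool" and X :: "'a set" and a b c :: 'a
  assumes sym: "\<And>x y. E x y \<Longrightarrow> E y x" and irr: "\<And>x. \<not> E x x"
    and paw: "pawfree S E" and XS: "X \<subseteq> S" and cmX: "cm X E"
    and tri: "a \<in> X" "b \<in> X" "c \<in> X" "E a b" "E b c" "E a c"
begin

lemma pawI: "p \<in> S \<Longrightarrow> q \<in> S \<Longrightarrow> r \<in> S \<Longrightarrow> s \<in> S \<Longrightarrow> E p q \<Longrightarrow> E q r \<Longrightarrow> E p r \<Longrightarrow> E r s \<Longrightarrow> \<not> E p s \<Longrightarrow> \<not> E q s \<Longrightarrow> False"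
  using paw unfolding pawfree_def by blast

lemma cmI: "p \<in> X \<Longrightarrow> q \<in> X \<Longrightarrow> r \<in> X \<Longrightarrow> p \<noteq> q \<Longrightarrow> q \<noteq> r \<Longrightarrow> p \<noteq> r \<Longrightarrow> \<not> E p q \<Longrightarrow> \<not> E q r \<Longrightarrow> \<not> E p r"
  using cmX unfolding cm_def by blast

lemma two_non:
  assumes "s \<in> X" "t \<in> X" "p \<in> X" "E s t" "\<not> E s p" "\<not> E t p"
  shows False
proof -
  have "s \<noteq> t" using assms(4) irr by auto
  show False
  proof (cases "s = p \<or> t = p")
    case True then show ?thesis using assms sym by auto
  next
    case False
    then show ?thesis using cmI[of s p t] assms \<open>s \<noteq> t\<close> sym by auto
  qed
qed

lemma common:
  assumes "p \<in> X" "q \<in> X" "E p q"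
  shows "\<exists>z\<in>X. E z p \<and> E z q"
proof (rule ccontr)
  assume "\<not> ?thesis"
  then have "\<not>E a p \<or> \<not>E a q" "\<not>E b p \<or> \<not>E b q" "\<not>E c p \<or> \<not>E c q" using tri by auto
  then show False
    using two_non[of a b p] two_non[of a c p] two_non[of b c p]
      two_non[of a b q] two_non[of a c q] two_non[of b c q] tri assms by blast
qed

lemma samepart:
  assumes "p \<in> X" "q \<in> X" "p \<noteq> q" "\<not> E p q"
  shows "\<exists>w1\<in>X. \<exists>w2\<in>X. E w1 w2 \<and> E w1 p \<and> E w1 q \<and> E w2 p \<and> E w2 q"
proof -
  have bad: "t = p \<or> \<not> E t p" if t: "t \<in> X" "\<not> (E t p \<and> E t q)" for t
  proof (cases "t = p")
    case False
    show ?thesis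
    proof (cases "E t p")
      case True
      then have "\<not> E t q" using t by auto
      show ?thesis
      proof (cases "t = q")
        case True then show ?thesis using assms sym by auto
      next
        case False
        then have "\<not> E t p" using cmI[of t q p] t(1) assms \<open>\<not> E t q\<close> \<open>t \<noteq> p\<close> sym by auto
        then show ?thesis by simp
      qed
    qed simp
  qed simp
  have nb2: False if "s \<in> X" "t \<in> X" "E s t" "s = p \<or> \<not> E s p" "t = p \<or> \<not> E t p" for s t
  proof -
    have "s \<noteq> t" using that irr by auto
    show False using that \<open>s \<noteq> t\<close> two_non[of s t p] assms(1) sym irr by auto
  qed
  show ?thesis
  proof (rule ccontr)
    assume na: "\<not> ?thesis"
    have "\<not> (E a p \<and> E a q) \<or> \<not> (E b p \<and> E b q)" using na tri by blast
    moreover have "\<not> (E a p \<and> E a q) \<or> \<not> (E c p \<and> E c q)" using na tri by blast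
    moreover have "\<not> (E b p \<and> E b q) \<or> \<not> (E c p \<and> E c q)" using na tri by blast
    ultimately show False
      using bad[of a] bad[of b] bad[of c] nb2[of a b] nb2[of a c] nb2[of b c] tri by blast
  qed
qed

lemma extend:
  assumes yT: "y \<in> S" "y \<notin> X" and x: "x \<in> X" "E x y"
  shows "cm (insert y X) E"
proof -
  have XS': "\<And>z. z \<in> X \<Longrightarrow> z \<in> S" using XS by auto
  have ii: "\<not> E p q" if pq: "p \<in> X" "q \<in> X" "\<not> E y p" "\<not> E y q" for p q
  proof
    assume pq': "E p q"
    obtain z where z: "z \<in> X" "E z p" "E z q" using common[OF pq(1,2) pq'] by blast
    have nyz: "\<not> E y z"
    proof
      assume "E y z"
      then show False using pawI[of p q z y] XS' pq pq' z yT sym by blast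
    qed
    have xne: "x \<noteq> p" "x \<noteq> q" "x \<noteq> z" using x pq nyz sym by auto
    have "(E x p \<and> E x q) \<or> (E x p \<and> E x z) \<or> (E x q \<and> E x z)"
      using two_non[of p q x] two_non[of z p x] two_non[of z q x] pq pq' z x sym by blast
    then show False
    proof (elim disjE)
      assume "E x p \<and> E x q"
      then show False using pawI[of p q x y] XS' pq pq' x yT sym by blast
    next
      assume "E x p \<and> E x z"
      then show False using pawI[of p z x y] XS' pq z x yT sym nyz by blast
    next
      assume "E x q \<and> E x z"
      then show False using pawI[of q z x y] XS' pq z x yT sym nyz by blast
    qed
  qed
  have i: "\<not> E y q" if pq: "p \<in> X" "q \<in> X" "p \<noteq> q" "\<not> E p q" "\<not> E y p" for p q
  proof
    assume yq: "E y q"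
    obtain w1 w2 where w: "w1 \<in> X" "w2 \<in> X" "E w1 w2" "E w1 p" "E w1 q" "E w2 p" "E w2 q"
      using samepart[OF pq(1-4)] by blast
    have n1: "\<not> E y w1"
    proof
      assume "E y w1"
      then show False using pawI[of y q w1 p] XS' pq w yq yT sym by blast
    qed
    have n2: "\<not> E y w2"
    proof
      assume "E y w2"
      then show False using pawI[of y q w2 p] XS' pq w yq yT sym by blast
    qed
    show False using ii[OF w(1,2) n1 n2] w(3) by simp
  qed
  show ?thesis unfolding cm_def
  proof (intro ballI impI)
    fix p q r assume p: "p \<in> insert y X" and q: "q \<in> insert y X" and r: "r \<in> insert y X"
      and d: "p \<noteq> q" "q \<noteq> r" "p \<noteq> r" and n: "\<not> E p q" "\<not> E q r"
    show "\<not> E p r"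
    proof (cases "p = y")
      case True
      then have "q \<in> X" "r \<in> X" using d q r by auto
      then show ?thesis using i[of q r] True n d by auto
    next
      case pny: False
      show ?thesis
      proof (cases "q = y")
        case True
        then have "p \<in> X" "r \<in> X" using d p r by auto
        then show ?thesis using ii[of p r] True n sym by auto
      next
        case qny: False
        show ?thesis
        proof (cases "r = y")
          case True
          then have "p \<in> X" "q \<in> X" using pny qny p q by auto
          then have "\<not> E y p" using i[of q p] True n d sym by auto
          then show ?thesis using True sym by auto
        next
          case False
          then show ?thesis using cmI[of p q r] pny qny p q r d n by auto
        qed
      qed
    qed
  qed
qed

end

lemma olariu:
  assumes sym: "\<And>x y. E x y \<Longrightarrow> E y x" and irr: "\<And>x. \<not> E x x"
    and paw: "pawfree S E" and TS: "T \<subseteq> S" and fin: "finite T"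
    and conn: "\<forall>x\<in>T. \<forall>y\<in>T. (induced E T)\<^sup>*\<^sup>* x y"
    and tri: "a \<in> T" "b \<in> T" "c \<in> T" "E a b" "E b c" "E a c"
  shows "cm T E"
proof -
  define F where "F = {X. X \<subseteq> T \<and> {a,b,c} \<subseteq> X \<and> cm X E}"
  have "cm {a,b,c} E" unfolding cm_def using tri sym by auto
  then have "{a,b,c} \<in> F" using tri by (auto simp: F_def)
  moreover have "finite F" by (rule finite_subset[of _ "Pow T"]) (auto simp: F_def fin)
  ultimately obtain X where X: "X \<in> F" and mx: "\<forall>Y\<in>F. X \<subseteq> Y \<longrightarrow> X = Y"
    using finite_has_maximal[of F] by blast
  have XT: "X \<subseteq> T" "{a,b,c} \<subseteq> X" "cm X E" using X by (auto simp: F_def)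
  show ?thesis
  proof (cases "X = T")
    case True then show ?thesis using XT by simp
  next
    case False
    then obtain q where q: "q \<in> T" "q \<notin> X" using XT by blast
    obtain s t where st: "induced E T s t" "s \<in> X" "t \<notin> X"
      using edge_out[OF conn[rule_format, OF tri(1) q(1)] _ q(2)] XT by blast
    have tT: "t \<in> T" using st by (auto simp: induced_def)
    interpret olctx S E X a b c
      using sym irr paw TS XT tri by unfold_locales auto
    have "cm (insert t X) E" using extend[of t s] tT TS st by (auto simp: induced_def)
    then have "insert t X \<in> F" using XT tT by (auto simp: F_def)
    then show ?thesis using mx st by blast
  qed
qed




lemma rtc_walk:
  assumes "R\<^sup>*\<^sup>* r y"
  shows "\<exists>g m. walkf R g m \<and> g 0 = r \<and> g m = y"
  using assms
proof (induction rule: rtranclp_induct)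
  case base
  show ?case by (rule exI[of _ "\<lambda>_. r"], rule exI[of _ 0]) (simp add: walkf_def)
next
  case (step y z)
  then obtain g m where g: "walkf R g m" "g 0 = r" "g m = y" by blast
  have "walkf R (g(Suc m := z)) (Suc m)" using g step(2) unfolding walkf_def
    by (auto simp: less_Suc_eq)
  moreover have "(g(Suc m := z)) 0 = r" "(g(Suc m := z)) (Suc m) = z" using g by auto
  ultimately show ?case by blast
qed

lemma closed_walk:
  assumes sym: "\<And>x y. R x y \<Longrightarrow> R y x"
    and g1: "walkf R g1 m1" and g2: "walkf R g2 m2" and s: "g1 0 = g2 0" and e: "R (g1 m1) (g2 m2)"
  shows "\<exists>h. walkf R h (m1 + 1 + m2) \<and> h 0 = h (m1 + 1 + m2)"
proof -
  define h where "h = (\<lambda>k. if k \<le> m1 then g1 k else g2 (m1 + 1 + m2 - k))"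
  have "walkf R h (m1 + 1 + m2)" unfolding walkf_def
  proof (intro allI impI)
    fix k assume k: "k < m1 + 1 + m2"
    consider "k < m1" | "k = m1" | "k > m1" by linarith
    then show "R (h k) (h (Suc k))"
    proof cases
      case 1 then show ?thesis using g1 by (simp add: h_def walkf_def)
    next
      case 2 then show ?thesis using e by (simp add: h_def)
    next
      case 3
      define l where "l = m1 + m2 - k"
      have l: "l < m2" "m1 + 1 + m2 - k = Suc l" "m1 + 1 + m2 - Suc k = l" using 3 k by (auto simp: l_def)
      have "R (g2 l) (g2 (Suc l))" using g2 l(1) by (simp add: walkf_def)
      then show ?thesis using 3 l sym by (simp add: h_def)
    qed
  qed
  moreover have "h 0 = h (m1 + 1 + m2)" using s by (simp add: h_def)
  ultimately show ?thesis by blast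
qed

lemma bip_colouring:
  assumes sym: "\<And>x y. R x y \<Longrightarrow> R y x"
    and conn: "\<forall>y\<in>T. R\<^sup>*\<^sup>* r y"
    and noodd: "\<And>g n. \<not> oddcw R g n"
  shows "\<exists>c. proper_colouring T R 2 c"
proof -
  define c where "c = (\<lambda>y. if \<exists>g m. walkf R g m \<and> g 0 = r \<and> g m = y \<and> even m then 0 else (1::nat))"
  have "proper_colouring T R 2 c" unfolding proper_colouring_def
  proof (intro conjI ballI impI)
    show "c ` T \<subseteq> {..<2}" by (auto simp: c_def)
  next
    fix y z assume yz: "y \<in> T" "z \<in> T" "R y z"
    show "c y \<noteq> c z"
    proof
      assume ceq: "c y = c z"
      obtain g1 m1 g2 m2 where w: "walkf R g1 m1" "g1 0 = r" "g1 m1 = y" "walkf R g2 m2" "g2 0 = r" "g2 m2 = z"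
        and par: "odd (m1 + 1 + m2)"
      proof (cases "c y = 0")
        case True
        then have "c z = 0" using ceq by simp
        then obtain g2 m2 where "walkf R g2 m2" "g2 0 = r" "g2 m2 = z" "even m2"
          unfolding c_def by (auto split: if_splits)
        moreover obtain g1 m1 where "walkf R g1 m1" "g1 0 = r" "g1 m1 = y" "even m1"
          using True unfolding c_def by (auto split: if_splits)
        ultimately show ?thesis using that by auto
      next
        case False
        then have nz: "c z \<noteq> 0" using ceq by simp
        obtain g1 m1 where g1: "walkf R g1 m1" "g1 0 = r" "g1 m1 = y" using rtc_walk conn yz by metis
        obtain g2 m2 where g2: "walkf R g2 m2" "g2 0 = r" "g2 m2 = z" using rtc_walk conn yz by metis
        have "odd m1" using False g1 unfolding c_def by (auto split: if_splits)
        moreover have "odd m2" using nz g2 unfolding c_def by (auto split: if_splits)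
        ultimately show ?thesis using that g1 g2 by auto
      qed
      obtain h where "walkf R h (m1 + 1 + m2)" "h 0 = h (m1 + 1 + m2)"
        using closed_walk[OF sym w(1) w(4)] w yz by auto
      then have "oddcw R h (m1 + 1 + m2)" using par by (simp add: oddcw_def)
      then show False using noodd by blast
    qed
  qed
  then show ?thesis by blast
qed

lemma combine_union:
  assumes T: "T = K \<union> L" "K \<inter> L = {}" and ne: "\<And>x y. x \<in> K \<Longrightarrow> y \<in> L \<Longrightarrow> \<not> E x y"
    and sym: "\<And>x y. E x y \<Longrightarrow> E y x"
    and c1: "proper_colouring K (induced E K) k1 c1" "clique K (induced E K) C1" "card C1 = k1"
    and c2: "proper_colouring L (induced E L) k2 c2" "clique L (induced E L) C2" "card C2 = k2"
  shows "\<exists>k c C. proper_colouring T (induced E T) k c \<and> clique T (induced E T) C \<and> card C = k"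
proof -
  define c where "c = (\<lambda>x. if x \<in> K then c1 x else c2 x)"
  have pc: "proper_colouring T (induced E T) (max k1 k2) c"
    unfolding proper_colouring_def
  proof (intro conjI ballI impI)
    show "c ` T \<subseteq> {..<max k1 k2}" using c1(1) c2(1) T unfolding proper_colouring_def c_def by fastforce
  next
    fix x y assume xy: "x \<in> T" "y \<in> T" "induced E T x y"
    then have e: "E x y" by (simp add: induced_def)
    show "c x \<noteq> c y"
    proof (cases "x \<in> K")
      case True
      then have "y \<in> K" using ne e xy T by auto
      then show ?thesis using c1(1) True e unfolding proper_colouring_def c_def induced_def by auto
    next
      case False
      then have "x \<in> L" using xy T by auto
      then have "y \<notin> K" using ne[of y x] sym[OF e] by blast
      then have "y \<in> L" using xy T by auto
      then show ?thesis using c2(1) False \<open>x \<in> L\<close> \<open>y \<notin> K\<close> e unfolding proper_colouring_def c_def induced_def by auto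
    qed
  qed
  show ?thesis
  proof (cases "k2 \<le> k1")
    case True
    have "clique T (induced E T) C1" using c1(2) T unfolding clique_def induced_def by auto
    then show ?thesis using pc True c1(3) by (intro exI[of _ "max k1 k2"] exI[of _ c] exI[of _ C1]) auto
  next
    case False
    have "clique T (induced E T) C2" using c2(2) T unfolding clique_def induced_def by auto
    then show ?thesis using pc False c2(3) by (intro exI[of _ "max k1 k2"] exI[of _ c] exI[of _ C2]) auto
  qed
qed

lemma add_class:
  assumes fin: "finite T" and x: "x \<in> T" and P: "P = {y \<in> T. y = x \<or> \<not> E x y}"
    and ind: "\<And>y z. y \<in> P \<Longrightarrow> z \<in> P \<Longrightarrow> \<not> E y z"
    and sym: "\<And>x y. E x y \<Longrightarrow> E y x"
    and c: "proper_colouring (T - P) (induced E (T - P)) k c" "clique (T - P) (induced E (T - P)) C" "card C = k"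
  shows "\<exists>k c C. proper_colouring T (induced E T) k c \<and> clique T (induced E T) C \<and> card C = k"
proof -
  define c' where "c' = (\<lambda>y. if y \<in> P then k else c y)"
  have pc: "proper_colouring T (induced E T) (Suc k) c'"
    unfolding proper_colouring_def
  proof (intro conjI ballI impI)
    show "c' ` T \<subseteq> {..<Suc k}" using c(1) unfolding proper_colouring_def c'_def by fastforce
  next
    fix y z assume yz: "y \<in> T" "z \<in> T" "induced E T y z"
    then have e: "E y z" by (simp add: induced_def)
    show "c' y \<noteq> c' z"
    proof (cases "y \<in> P")
      case True
      then have "z \<notin> P" using ind e by blast
      then have "c z < k" using c(1) yz unfolding proper_colouring_def by auto
      then show ?thesis using True \<open>z \<notin> P\<close> by (simp add: c'_def)
    next
      case False
      show ?thesis
      proof (cases "z \<in> P")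
        case True
        have "c y < k" using c(1) yz False unfolding proper_colouring_def by auto
        then show ?thesis using True False by (simp add: c'_def)
      next
        case False
        then show ?thesis using c(1) \<open>y \<notin> P\<close> yz e unfolding proper_colouring_def c'_def induced_def by auto
      qed
    qed
  qed
  have CT: "C \<subseteq> T - P" using c(2) by (simp add: clique_def)
  have xC: "x \<notin> C" using CT x P by auto
  have cl: "clique T (induced E T) (insert x C)"
    unfolding clique_def
  proof (intro conjI ballI impI)
    show "insert x C \<subseteq> T" using CT x by auto
  next
    fix y z assume yz: "y \<in> insert x C" "z \<in> insert x C" "y \<noteq> z"
    have adjx: "\<And>w. w \<in> C \<Longrightarrow> E x w" using CT P by auto
    have symx: "\<And>w. w \<in> C \<Longrightarrow> E w x" using sym adjx by blast
    show "induced E T y z"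
      using yz adjx symx c(2) CT x unfolding clique_def induced_def by auto
  qed
  have "card (insert x C) = Suc k" using xC c(3) finite_subset[OF CT] fin by simp
  then show ?thesis using pc cl by blast
qed




lemma rtc_sym:
  assumes sym: "\<And>a b. R a b \<Longrightarrow> R b a" and "R\<^sup>*\<^sup>* x y"
  shows "R\<^sup>*\<^sup>* y x"
  using assms(2)
proof (induction rule: rtranclp_induct)
  case base then show ?case by simp
next
  case (step y z)
  show ?case by (rule converse_rtranclp_into_rtranclp[OF sym[OF step(2)] step(3)])
qed

lemma cmD: "cm X E \<Longrightarrow> a \<in> X \<Longrightarrow> b \<in> X \<Longrightarrow> c \<in> X \<Longrightarrow> a \<noteq> b \<Longrightarrow> b \<noteq> c \<Longrightarrow> a \<noteq> c \<Longrightarrow> \<not> E a b \<Longrightarrow> \<not> E b c \<Longrightarrow> \<not> E a c"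
  unfolding cm_def by blast

lemma hole_mono: "hole T E f n \<Longrightarrow> T \<subseteq> S \<Longrightarrow> hole S E f n"
  unfolding hole_def by blast

lemma colour_main:
  fixes S :: "'a set" and E :: "'a \<Rightarrow> 'a \<Rightarrow> bool"
  assumes sym: "\<And>x y. E x y \<Longrightarrow> E y x" and irr: "\<And>x. \<not> E x x"
    and paw: "pawfree S E" and nohole: "\<And>f n. \<not> hole S E f n"
    and fin: "finite T" and TS: "T \<subseteq> S"
  shows "\<exists>k c C. proper_colouring T (induced E T) k c \<and> clique T (induced E T) C \<and> card C = k"
  using fin TS
proof (induction "card T" arbitrary: T rule: less_induct)
  case less
  have IH: "\<exists>k c C. proper_colouring T' (induced E T') k c \<and> clique T' (induced E T') C \<and> card C = k"
    if "T' \<subseteq> T" "T' \<noteq> T" for T'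
  proof -
    have "card T' < card T" using that less.prems psubset_card_mono by blast
    moreover have "finite T'" using that less.prems finite_subset by blast
    ultimately show ?thesis using less.hyps that less.prems by blast
  qed
  let ?R = "induced E T"
  have symR: "\<And>a b. ?R a b \<Longrightarrow> ?R b a" using sym by (auto simp: induced_def)
  show ?case
  proof (cases "T = {}")
    case True
    show ?thesis
      by (rule exI[of _ 0], rule exI[of _ "\<lambda>_. 0"], rule exI[of _ "{}"])
        (simp add: True proper_colouring_def clique_def)
  next
    case False
    then obtain x where x: "x \<in> T" by blast
    show ?thesis
    proof (cases "\<forall>y\<in>T. ?R\<^sup>*\<^sup>* x y")
      case False
      then obtain y where y: "y \<in> T" "\<not> ?R\<^sup>*\<^sup>* x y" by blast
      define K where "K = {z \<in> T. ?R\<^sup>*\<^sup>* x z}"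
      define L where "L = T - K"
      have xK: "x \<in> K" using x by (simp add: K_def)
      have yK: "y \<notin> K" using y by (simp add: K_def)
      obtain k1 c1 C1 where c1: "proper_colouring K (induced E K) k1 c1" "clique K (induced E K) C1" "card C1 = k1"
        using IH[of K] yK y by (auto simp: K_def)
      obtain k2 c2 C2 where c2: "proper_colouring L (induced E L) k2 c2" "clique L (induced E L) C2" "card C2 = k2"
        using IH[of L] xK x by (auto simp: L_def)
      have ne: "\<not> E z w" if "z \<in> K" "w \<in> L" for z w
      proof
        assume e: "E z w"
        have "?R z w" using e that by (auto simp: induced_def K_def L_def)
        then have "?R\<^sup>*\<^sup>* x w" using that by (auto simp: K_def)
        then show False using that by (auto simp: K_def L_def)
      qed
      show ?thesis
        by (rule combine_union[OF _ _ ne sym c1 c2]) (auto simp: K_def L_def)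
    next
      case True
      have conn: "\<forall>a\<in>T. \<forall>b\<in>T. ?R\<^sup>*\<^sup>* a b"
      proof (intro ballI)
        fix a b assume "a \<in> T" "b \<in> T"
        then have "?R\<^sup>*\<^sup>* a x" "?R\<^sup>*\<^sup>* x b" using True rtc_sym[of "?R" x a] symR by blast+
        then show "?R\<^sup>*\<^sup>* a b" by simp
      qed
      show ?thesis
      proof (cases "\<exists>a\<in>T. \<exists>b\<in>T. \<exists>c\<in>T. E a b \<and> E b c \<and> E a c")
        case True
        then obtain a b c where tri: "a \<in> T" "b \<in> T" "c \<in> T" "E a b" "E b c" "E a c" by blast
        have cmT: "cm T E" using olariu[OF sym irr paw less.prems(2) less.prems(1) conn tri] .
        define P where "P = {y \<in> T. y = x \<or> \<not> E x y}"
        have ind: "\<not> E y z" if "y \<in> P" "z \<in> P" for y z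
        proof (cases "y = z")
          case True then show ?thesis using irr by simp
        next
          case False
          show ?thesis
          proof (cases "y = x \<or> z = x")
            case True then show ?thesis using that False sym by (auto simp: P_def)
          next
            case False
            have yz: "y \<in> T" "z \<in> T" "\<not> E x y" "\<not> E x z" using that False by (auto simp: P_def)
            have "\<not> E y x" using yz(3) sym by blast
            show ?thesis by (rule cmD[OF cmT yz(1) x yz(2)]) (use False \<open>y \<noteq> z\<close> yz \<open>\<not> E y x\<close> in auto)
          qed
        qed
        obtain k c C where c: "proper_colouring (T - P) (induced E (T - P)) k c"
          "clique (T - P) (induced E (T - P)) C" "card C = k"
          using IH[of "T - P"] x by (auto simp: P_def)
        show ?thesis by (rule add_class[OF less.prems(1) x P_def ind sym c])
      next
        case notri: False
        show ?thesis
        proof (cases "\<exists>g n. oddcw ?R g n")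
          case True
          define n0 where "n0 = (LEAST n. \<exists>g. oddcw ?R g n)"
          have "\<exists>g. oddcw ?R g n0" unfolding n0_def by (rule LeastI_ex) (use True in blast)
          then obtain g where g: "oddcw ?R g n0" by blast
          have mini: "\<And>h m. m < n0 \<Longrightarrow> \<not> oddcw ?R h m"
            unfolding n0_def using not_less_Least by blast
          have W: "\<And>l. l < n0 \<Longrightarrow> ?R (g l) (g (Suc l))" and gn: "g n0 = g 0" and on: "odd n0"
            using g unfolding oddcw_def walkf_def by auto
          have "n0 \<noteq> 1"
          proof
            assume "n0 = 1"
            then show False using W[of 0] gn irr by (auto simp: induced_def)
          qed
          moreover have "n0 \<noteq> 3"
          proof
            assume n3: "n0 = 3"
            have "?R (g 0) (g 1)" "?R (g 1) (g 2)" "?R (g 2) (g 0)"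
              using W[of 0] W[of 1] W[of 2] gn n3 by (auto simp: numeral_eq_Suc)
            then have "g 0 \<in> T" "g 1 \<in> T" "g 2 \<in> T" "E (g 0) (g 1)" "E (g 1) (g 2)" "E (g 0) (g 2)"
              using sym by (auto simp: induced_def)
            then show False using notri by blast
          qed
          ultimately have "5 \<le> n0" using on by presburger
          then have "hole T E (\<lambda>i. g (nat (i mod int n0))) (int n0)"
            using hole_from_oddcw[OF sym irr g mini] by blast
          then show ?thesis using nohole hole_mono less.prems(2) by blast
        next
          case False
          then have noodd: "\<And>g n. \<not> oddcw ?R g n" by blast
          obtain c where c: "proper_colouring T ?R 2 c"
            using bip_colouring[OF symR _ noodd, of T x] True by blast
          show ?thesis
          proof (cases "T = {x}")
            case True
            show ?thesis
              by (rule exI[of _ 1], rule exI[of _ "\<lambda>_. 0"], rule exI[of _ "{x}"])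
                (simp add: True proper_colouring_def clique_def induced_def irr)
          next
            case False
            then obtain y where y: "y \<in> T" "y \<noteq> x" using x by blast
            have "?R\<^sup>*\<^sup>* x y" using conn x y by blast
            then obtain z where z: "?R x z" using y(2) by (metis converse_rtranclpE)
            have "x \<noteq> z" using z irr by (auto simp: induced_def)
            moreover have "clique T ?R {x, z}" using z symR by (auto simp: clique_def induced_def)
            ultimately show ?thesis using c by (intro exI[of _ 2] exI[of _ c] exI[of _ "{x,z}"]) auto
          qed
        qed
      qed
    qed
  qed
qed




lemma pawfree_M:
  assumes G: "graph V E" and nc: "\<not> has_induced V E codart_V codart_E" and vV: "v \<in> V"
  shows "pawfree (nonnbrs V E v) E"
  unfolding pawfree_def
proof (intro ballI impI)
  fix a b c d assume M: "a \<in> nonnbrs V E v" "b \<in> nonnbrs V E v" "c \<in> nonnbrs V E v" "d \<in> nonnbrs V E v"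
    and e: "E a b" "E b c" "E a c" "E c d" "\<not> E a d" "\<not> E b d"
  have sym: "\<And>x y. E x y \<Longrightarrow> E y x" and irr: "\<And>x. \<not> E x x" using G by (auto simp: graph_def)
  have Mp: "\<And>x. x \<in> nonnbrs V E v \<Longrightarrow> x \<in> V \<and> \<not> E v x \<and> \<not> E x v" using sym by (auto simp: nonnbrs_def)
  have "has_induced V E codart_V codart_E"
    apply (rule codart_emb[of c V a b d v E, OF _ _ _ _ vV sym irr])
    using Mp[OF M(1)] Mp[OF M(2)] Mp[OF M(3)] Mp[OF M(4)] e sym by blast+
  with nc show False by blast
qed

theorem theorem3p8:
  fixes V :: "'a set" and E :: "'a \<Rightarrow> 'a \<Rightarrow> bool"
  assumes "graph V E"
    and "connected_graph V E"
    and "\<not> has_induced V E fork_V fork_E"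
    and "\<not> has_induced V E codart_V codart_E"
  shows "(\<exists>S. homogeneous_set V E S) \<or>
         (\<forall>v\<in>V. perfect (nonnbrs V E v) (induced E (nonnbrs V E v)))"
proof (cases "\<exists>S. homogeneous_set V E S")
  case True then show ?thesis by blast
next
  case False
  note nh = False
  have sym: "\<And>x y. E x y \<Longrightarrow> E y x" and irr: "\<And>x. \<not> E x x" and finV: "finite V"
    using assms(1) by (auto simp: graph_def)
  have "\<forall>v\<in>V. perfect (nonnbrs V E v) (induced E (nonnbrs V E v))"
  proof
    fix v assume vV: "v \<in> V"
    let ?M = "nonnbrs V E v"
    have paw: "pawfree ?M E" using pawfree_M[OF assms(1,4) vV] .
    have nohole: "\<not> hole ?M E f n" for f n
    proof
      assume h: "hole ?M E f n"
      have hc: "hctx V E v f n" using assms(1,3,4) vV h by unfold_locales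
      show False using hctx.homog[OF hc] nh by blast
    qed
    show "perfect ?M (induced E ?M)" unfolding perfect_def
    proof (intro allI impI)
      fix T assume TM: "T \<subseteq> ?M"
      have finT: "finite T" using TM finV finite_subset by (auto simp: nonnbrs_def)
      have ind: "induced (induced E ?M) T = induced E T" using TM by (auto simp: induced_def fun_eq_iff)
      obtain k c C where "proper_colouring T (induced E T) k c" "clique T (induced E T) C" "card C = k"
        using colour_main[OF sym irr paw nohole finT TM] by blast
      then show "chromatic_number T (induced (induced E ?M) T) = clique_number T (induced (induced E ?M) T)"
        unfolding ind using chi_omega[OF finT] by blast
    qed
  qed
  then show ?thesis by blast
qed



end
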